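(* In $\mathbf{MetCH_{sep}}$, the pushout of an embedding along any morphism is an embedding.
   Context: A metric on a set $X$ is a map $d\colon X\times X\to[0,\infty]$ with $d(x,x)=0$ and $d(x,z)\le d(x,y)+d(y,z)$ (not necessarily symmetric, $\infty$ allowed); separated means $d(x,y)=0=d(y,x)$ implies $x=y$. A separated metric compact Hausdorff space is a compact Hausdorff space with a separated metric $d\colon X\times X\to[0,\infty]$ continuous with respect to the upper topology on $[0,\infty]$ (open sets $]u,\infty]$, plus $\emptyset$ and $[0,\infty]$). $\mathbf{MetCH_{sep}}$ has these spaces as objects and continuous non-expansive maps ($d_Y(f(x),f(y))\le d_X(x,y)$) as morphisms. An embedding is an injective morphism $f\colon X\to Y$ with $d_X(x,y)=d_Y(f(x),f(y))$ for all $x,y$. ($\mathbf{MetCH_{sep}}$ is cocomplete, so pushouts exist.) *)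

theory Defs
  imports "HOL-Analysis.Analysis" "HOL-Library.Extended_Nonnegative_Real"
begin

text \<open>Objects of MetCH_sep: a topology T (carrier topspace T) with a function
  d into [0,\<infinity>] (ennreal), considered on the carrier only.\<close>

definition metric_on :: "'a set \<Rightarrow> ('a \<Rightarrow> 'a \<Rightarrow> ennreal) \<Rightarrow> bool" where
  "metric_on S d \<longleftrightarrow> (\<forall>x\<in>S. d x x = 0) \<and>
     (\<forall>x\<in>S. \<forall>y\<in>S. \<forall>z\<in>S. d x z \<le> d x y + d y z)"

definition separated_metric :: "'a set \<Rightarrow> ('a \<Rightarrow> 'a \<Rightarrow> ennreal) \<Rightarrow> bool" where
  "separated_metric S d \<longleftrightarrow> (\<forall>x\<in>S. \<forall>y\<in>S. d x y = 0 \<and> d y x = 0 \<longrightarrow> x = y)"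

text \<open>Continuity of d : X \<times> X \<rightarrow> [0,\<infinity>] w.r.t. the upper topology on [0,\<infinity>],
  whose nontrivial open sets are ]u,\<infinity>]: preimages of these must be open.\<close>
definition upper_continuous :: "'a topology \<Rightarrow> ('a \<Rightarrow> 'a \<Rightarrow> ennreal) \<Rightarrow> bool" where
  "upper_continuous T d \<longleftrightarrow>
     (\<forall>u::ennreal. openin (prod_topology T T)
        {p \<in> topspace T \<times> topspace T. u < d (fst p) (snd p)})"

definition metCH_sep :: "'a topology \<Rightarrow> ('a \<Rightarrow> 'a \<Rightarrow> ennreal) \<Rightarrow> bool" where
  "metCH_sep T d \<longleftrightarrow> compact_space T \<and> Hausdorff_space T \<and>
     metric_on (topspace T) d \<and> separated_metric (topspace T) d \<and> upper_continuous T d"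

definition metCH_mor :: "'a topology \<Rightarrow> ('a \<Rightarrow> 'a \<Rightarrow> ennreal) \<Rightarrow>
    'b topology \<Rightarrow> ('b \<Rightarrow> 'b \<Rightarrow> ennreal) \<Rightarrow> ('a \<Rightarrow> 'b) \<Rightarrow> bool" where
  "metCH_mor T d T' d' f \<longleftrightarrow> continuous_map T T' f \<and>
     (\<forall>x\<in>topspace T. \<forall>y\<in>topspace T. d' (f x) (f y) \<le> d x y)"

definition metCH_embedding :: "'a topology \<Rightarrow> ('a \<Rightarrow> 'a \<Rightarrow> ennreal) \<Rightarrow>
    'b topology \<Rightarrow> ('b \<Rightarrow> 'b \<Rightarrow> ennreal) \<Rightarrow> ('a \<Rightarrow> 'b) \<Rightarrow> bool" where
  "metCH_embedding T d T' d' f \<longleftrightarrow> metCH_mor T d T' d' f \<and> inj_on f (topspace T) \<and>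
     (\<forall>x\<in>topspace T. \<forall>y\<in>topspace T. d' (f x) (f y) = d x y)"

text \<open>Pushout square  X --f--> Y, X --h--> Z, Y --gY--> P, Z --gZ--> P
  in MetCH_sep, with the universal property tested against all objects
  whose carrier lives in the type 'q.\<close>
definition metCH_pushout ::
  "'q itself \<Rightarrow>
   'x topology \<Rightarrow> ('x \<Rightarrow> 'x \<Rightarrow> ennreal) \<Rightarrow>
   'y topology \<Rightarrow> ('y \<Rightarrow> 'y \<Rightarrow> ennreal) \<Rightarrow>
   'z topology \<Rightarrow> ('z \<Rightarrow> 'z \<Rightarrow> ennreal) \<Rightarrow>
   'p topology \<Rightarrow> ('p \<Rightarrow> 'p \<Rightarrow> ennreal) \<Rightarrow>
   ('x \<Rightarrow> 'y) \<Rightarrow> ('x \<Rightarrow> 'z) \<Rightarrow> ('y \<Rightarrow> 'p) \<Rightarrow> ('z \<Rightarrow> 'p) \<Rightarrow> bool" where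
  "metCH_pushout _ X dX Y dY Z dZ P dP f h gY gZ \<longleftrightarrow>
     metCH_sep X dX \<and> metCH_sep Y dY \<and> metCH_sep Z dZ \<and> metCH_sep P dP \<and>
     metCH_mor X dX Y dY f \<and> metCH_mor X dX Z dZ h \<and>
     metCH_mor Y dY P dP gY \<and> metCH_mor Z dZ P dP gZ \<and>
     (\<forall>x\<in>topspace X. gY (f x) = gZ (h x)) \<and>
     (\<forall>(Q :: 'q topology) dQ a b.
        metCH_sep Q dQ \<and> metCH_mor Y dY Q dQ a \<and> metCH_mor Z dZ Q dQ b \<and>
        (\<forall>x\<in>topspace X. a (f x) = b (h x)) \<longrightarrow>
        (\<exists>u. metCH_mor P dP Q dQ u \<and>
             (\<forall>y\<in>topspace Y. u (gY y) = a y) \<and> (\<forall>z\<in>topspace Z. u (gZ z) = b z) \<and>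
             (\<forall>v. metCH_mor P dP Q dQ v \<and>
                  (\<forall>y\<in>topspace Y. v (gY y) = a y) \<and> (\<forall>z\<in>topspace Z. v (gZ z) = b z)
                  \<longrightarrow> (\<forall>p\<in>topspace P. v p = u p))))"

end

theory Submission
  imports Defs
begin

lemma INF_add_ennreal: "(INF i\<in>I. A i) + (c::ennreal) = (INF i\<in>I. A i + c)"
proof (cases "I = {}")
  case True then show ?thesis by simp
next
  case False
  have "(\<lambda>x. x + c) (Inf (A`I)) = (INF s\<in>A`I. s + c)"
    by (rule continuous_at_Inf_mono) (auto simp: mono_def add_mono False intro!: continuous_intros)
  then show ?thesis by (simp add: image_comp o_def)
qed

lemma le_INF_addI:
  fixes L c :: ennreal
  assumes "\<And>i. i\<in>I \<Longrightarrow> L \<le> A i + c"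
  shows "L \<le> (INF i\<in>I. A i) + c"
  unfolding INF_add_ennreal by (rule INF_greatest) (use assms in auto)

lemma le_add_INFI:
  fixes L c :: ennreal
  assumes "\<And>i. i\<in>I \<Longrightarrow> L \<le> c + A i"
  shows "L \<le> c + (INF i\<in>I. A i)"
  using le_INF_addI[of I L A c] assms by (simp add: add.commute)

definition lsc :: "'a topology \<Rightarrow> ('a \<Rightarrow> ennreal) \<Rightarrow> bool" where
  "lsc T F \<longleftrightarrow> (\<forall>u. openin T {p \<in> topspace T. u < F p})"

lemma lsc_compose:
  assumes "lsc T F" "continuous_map T' T g"
  shows "lsc T' (\<lambda>p. F (g p))"
  unfolding lsc_def
proof
  fix u
  have "{p \<in> topspace T'. u < F (g p)} = {p \<in> topspace T'. g p \<in> {q \<in> topspace T. u < F q}}"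
    using assms(2) by (auto simp: continuous_map_def)
  moreover have "openin T' {p \<in> topspace T'. g p \<in> {q \<in> topspace T. u < F q}}"
    using assms unfolding lsc_def by (blast intro: openin_continuous_map_preimage)
  ultimately show "openin T' {p \<in> topspace T'. u < F (g p)}" by simp
qed

lemma lsc_min:
  assumes "lsc T F" "lsc T G"
  shows "lsc T (\<lambda>p. min (F p) (G p))"
  unfolding lsc_def
proof
  fix u
  have "{p \<in> topspace T. u < min (F p) (G p)} = {p \<in> topspace T. u < F p} \<inter> {p \<in> topspace T. u < G p}"
    by auto
  then show "openin T {p \<in> topspace T. u < min (F p) (G p)}"
    using assms unfolding lsc_def by auto
qed

lemma ennreal_less_add_split:
  fixes u a b :: ennreal
  assumes "u < a + b"
  shows "u < a \<or> u < b \<or> (\<exists>v w. v < a \<and> w < b \<and> u \<le> v + w)"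
proof (cases "a = 0 \<or> b = 0")
  case True then show ?thesis using assms by auto
next
  case False
  then have a0: "0 < a" and b0: "0 < b" by (auto simp: zero_less_iff_neq_zero)
  have ut: "u < top" using assms top.not_eq_extremum by fastforce
  show ?thesis
  proof (cases "a = top \<or> b = top")
    case True
    then show ?thesis using ut a0 b0 by auto
  next
    case False
    then have at: "a < top" and bt: "b < top" by (auto simp: top.not_eq_extremum)
    define ra where "ra = enn2real a"
    define rb where "rb = enn2real b"
    define ru where "ru = enn2real u"
    have ra: "a = ennreal ra" using at by (simp add: ra_def)
    have rb: "b = ennreal rb" using bt by (simp add: rb_def)
    have ru: "u = ennreal ru" using ut by (simp add: ru_def)
    have pa: "ra > 0" using a0 at by (simp add: ra_def enn2real_positive_iff)
    have pb: "rb > 0" using b0 bt by (simp add: rb_def enn2real_positive_iff)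
    have ru0: "ru \<ge> 0" by (simp add: ru_def)
    have "ennreal ru < ennreal (ra + rb)" using assms ra rb ru pa pb by simp
    then have lt: "ru < ra + rb" using ru0 by (simp add: ennreal_less_iff)
    define t where "t = ru / (ra + rb)"
    have t0: "t \<ge> 0" using ru0 pa pb by (simp add: t_def)
    have t1: "t < 1" using lt pa pb by (simp add: t_def)
    have "t * ra < ra" using t1 pa by simp
    moreover have "t * rb < rb" using t1 pb by simp
    moreover have "t * ra + t * rb = ru"
    proof -
      have "t * ra + t * rb = t * (ra + rb)" by (simp add: algebra_simps)
      also have "\<dots> = ru" using pa pb by (simp add: t_def)
      finally show ?thesis .
    qed
    ultimately have "ennreal (t*ra) < a \<and> ennreal (t*rb) < b \<and> u \<le> ennreal (t*ra) + ennreal (t*rb)"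
      using ra rb ru t0 pa pb by (simp add: ennreal_lessI flip: ennreal_plus)
    then show ?thesis by blast
  qed
qed

lemma lsc_add:
  assumes "lsc T F" "lsc T G"
  shows "lsc T (\<lambda>p. F p + G p)"
  unfolding lsc_def
proof
  fix u
  define R where "R = {p \<in> topspace T. u < F p} \<union> {p \<in> topspace T. u < G p}
     \<union> (\<Union>vw\<in>{vw. u \<le> fst vw + snd vw}. {p \<in> topspace T. fst vw < F p} \<inter> {p \<in> topspace T. snd vw < G p})"
  have "{p \<in> topspace T. u < F p + G p} = R"
  proof (intro set_eqI iffI)
    fix p assume p: "p \<in> {p \<in> topspace T. u < F p + G p}"
    then have "u < F p \<or> u < G p \<or> (\<exists>v w. v < F p \<and> w < G p \<and> u \<le> v + w)"
      by (intro ennreal_less_add_split) simp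
    then show "p \<in> R"
    proof (elim disjE exE conjE)
      fix v w assume "v < F p" "w < G p" "u \<le> v + w"
      then show "p \<in> R" using p unfolding R_def by (intro UnI2 UN_I[of "(v,w)"]) auto
    qed (use p in \<open>auto simp: R_def\<close>)
  next
    fix p assume "p \<in> R"
    then have pT: "p \<in> topspace T" and "u < F p \<or> u < G p \<or> (\<exists>v w. v < F p \<and> w < G p \<and> u \<le> v + w)"
      unfolding R_def by auto
    then have "u < F p + G p"
    proof (elim disjE exE conjE)
      assume "u < F p" then show ?thesis by (rule order_less_le_trans) simp
    next
      assume "u < G p" then show ?thesis by (rule order_less_le_trans) simp
    next
      fix v w assume "v < F p" "w < G p" "u \<le> v + w"
      moreover have "v + w < F p + G p" using calculation by (intro add_strict_mono)
      ultimately show ?thesis by order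
    qed
    then show "p \<in> {p \<in> topspace T. u < F p + G p}" using pT by simp
  qed
  moreover have "openin T R" using assms unfolding lsc_def R_def
    by (intro openin_Un openin_Union openin_Int) auto
  ultimately show "openin T {p \<in> topspace T. u < F p + G p}" by simp
qed

lemma lsc_INF:
  assumes "compact_space T" "Hausdorff_space T" "compact_space K"
    and F: "lsc (prod_topology T K) F"
  shows "lsc T (\<lambda>t. INF k\<in>topspace K. F (t,k))"
  unfolding lsc_def
proof
  fix u :: ennreal
  show "openin T {t \<in> topspace T. u < (INF k\<in>topspace K. F (t,k))}"
  proof (cases "u = top")
    case True then show ?thesis by simp
  next
    case False
    define C where "C v = fst ` {q \<in> topspace T \<times> topspace K. F q \<le> v}" for v
    have cC: "closedin T (C v)" for v
    proof -
      have e: "{q \<in> topspace T \<times> topspace K. F q \<le> v} = topspace (prod_topology T K) - {q \<in> topspace T \<times> topspace K. v < F q}"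
        by auto
      have "closedin (prod_topology T K) {q \<in> topspace T \<times> topspace K. F q \<le> v}"
        unfolding e using F unfolding lsc_def by (intro closedin_diff closedin_topspace) simp
      moreover have "compact_space (prod_topology T K)"
        using assms by (simp add: compact_space_prod_topology)
      ultimately have "compactin (prod_topology T K) {q \<in> topspace T \<times> topspace K. F q \<le> v}"
        by (intro closedin_compact_space)
      then have "compactin T (C v)" unfolding C_def
        by (rule image_compactin) (rule continuous_map_fst)
      then show ?thesis using assms(2) by (simp add: compactin_imp_closedin)
    qed
    have eq: "{t \<in> topspace T. u < (INF k\<in>topspace K. F (t,k))} = topspace T - \<Inter>(C ` {v. u < v})"
    proof (intro set_eqI iffI)
      fix t assume t: "t \<in> {t \<in> topspace T. u < (INF k\<in>topspace K. F (t,k))}"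
      then obtain v where uv: "u < v" "v < (INF k\<in>topspace K. F (t,k))" using dense by blast
      have "t \<notin> C v"
      proof
        assume "t \<in> C v"
        then obtain k where "k \<in> topspace K" "F (t,k) \<le> v" unfolding C_def by auto
        then have "(INF k\<in>topspace K. F (t,k)) \<le> v" by (meson INF_lower2)
        then show False using uv by simp
      qed
      then show "t \<in> topspace T - \<Inter>(C ` {v. u < v})" using t uv by blast
    next
      fix t assume t: "t \<in> topspace T - \<Inter>(C ` {v. u < v})"
      then obtain v where uv: "u < v" "t \<notin> C v" by blast
      have tT: "t \<in> topspace T" using t by blast
      have "\<not> (INF k\<in>topspace K. F (t,k)) < v"
      proof
        assume "(INF k\<in>topspace K. F (t,k)) < v"
        then obtain k where k: "k \<in> topspace K" "F (t,k) < v" by (auto simp: INF_less_iff)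
        then have "(t,k) \<in> {q \<in> topspace T \<times> topspace K. F q \<le> v}" using tT by simp
        then have "t \<in> C v" unfolding C_def by (rule rev_image_eqI) simp
        then show False using uv by simp
      qed
      then show "t \<in> {t \<in> topspace T. u < (INF k\<in>topspace K. F (t,k))}"
        using tT uv by (simp add: not_less)
    qed
    have ne: "C ` {v. u < v} \<noteq> {}" using False by (auto simp: top.not_eq_extremum)
    have "closedin T (\<Inter>(C ` {v. u < v}))"
      by (rule closedin_Inter[OF ne]) (use cC in blast)
    then show ?thesis unfolding eq by (rule openin_diff[OF openin_topspace])
  qed
qed

lemma min_add_ennreal: fixes a b c :: ennreal shows "min a b + c = min (a+c) (b+c)"
proof (cases "a \<le> b")
  case True then have "a + c \<le> b + c" by (rule add_right_mono)
  with True show ?thesis by (simp add: min_absorb1)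
next
  case False then have ba: "b \<le> a" by simp
  then have "b + c \<le> a + c" by (rule add_right_mono)
  with ba show ?thesis by (simp add: min_absorb2)
qed

lemma add_min_ennreal: fixes a b c :: ennreal shows "c + min a b = min (c+a) (c+b)"
  using min_add_ennreal[of a b c] by (simp add: add.commute)

locale glue =
  fixes X :: "'x topology" and dX :: "'x \<Rightarrow> 'x \<Rightarrow> ennreal"
    and Y :: "'y topology" and dY :: "'y \<Rightarrow> 'y \<Rightarrow> ennreal"
    and Z :: "'z topology" and dZ :: "'z \<Rightarrow> 'z \<Rightarrow> ennreal"
    and f :: "'x \<Rightarrow> 'y" and h :: "'x \<Rightarrow> 'z" and pty :: "'p itself"
  assumes sX: "metCH_sep X dX" and sY: "metCH_sep Y dY" and sZ: "metCH_sep Z dZ"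
    and emb: "metCH_embedding X dX Y dY f" and hm: "metCH_mor X dX Z dZ h"
begin

lemma fX: "x \<in> topspace X \<Longrightarrow> f x \<in> topspace Y"
  using emb unfolding metCH_embedding_def metCH_mor_def continuous_map_def by blast
lemma hX: "x \<in> topspace X \<Longrightarrow> h x \<in> topspace Z"
  using hm unfolding metCH_mor_def continuous_map_def by blast
lemma hf: "x \<in> topspace X \<Longrightarrow> x' \<in> topspace X \<Longrightarrow> dZ (h x) (h x') \<le> dY (f x) (f x')"
  using emb hm unfolding metCH_embedding_def metCH_mor_def by simp
lemma dY0: "y \<in> topspace Y \<Longrightarrow> dY y y = 0"
  using sY unfolding metCH_sep_def metric_on_def by blast
lemma dZ0: "z \<in> topspace Z \<Longrightarrow> dZ z z = 0"
  using sZ unfolding metCH_sep_def metric_on_def by blast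
lemma dYt: "a \<in> topspace Y \<Longrightarrow> b \<in> topspace Y \<Longrightarrow> c \<in> topspace Y \<Longrightarrow> dY a c \<le> dY a b + dY b c"
  using sY unfolding metCH_sep_def metric_on_def by blast
lemma dZt: "a \<in> topspace Z \<Longrightarrow> b \<in> topspace Z \<Longrightarrow> c \<in> topspace Z \<Longrightarrow> dZ a c \<le> dZ a b + dZ b c"
  using sZ unfolding metCH_sep_def metric_on_def by blast

definition cYZ where "cYZ y z = (INF x\<in>topspace X. dY y (f x) + dZ (h x) z)"
definition cZY where "cZY z y = (INF x\<in>topspace X. dZ z (h x) + dY (f x) y)"
definition PP where "PP y y' = (INF x\<in>topspace X. dY y (f x) + cZY (h x) y')"
definition cYY where "cYY y y' = min (dY y y') (PP y y')"

lemma cZY_f: assumes "x \<in> topspace X" "z \<in> topspace Z" shows "dZ z (h x) \<le> cZY z (f x)"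
  unfolding cZY_def
proof (rule INF_greatest)
  fix x' assume x': "x' \<in> topspace X"
  have "dZ z (h x) \<le> dZ z (h x') + dZ (h x') (h x)" using assms x' by (simp add: dZt hX)
  also have "\<dots> \<le> dZ z (h x') + dY (f x') (f x)" using assms x' by (intro add_left_mono hf)
  finally show "dZ z (h x) \<le> dZ z (h x') + dY (f x') (f x)" .
qed

lemma cYZ_f: assumes "x \<in> topspace X" "z \<in> topspace Z" shows "dZ (h x) z \<le> cYZ (f x) z"
  unfolding cYZ_def
proof (rule INF_greatest)
  fix x' assume x': "x' \<in> topspace X"
  have "dZ (h x) z \<le> dZ (h x) (h x') + dZ (h x') z" using assms x' by (simp add: dZt hX)
  also have "\<dots> \<le> dY (f x) (f x') + dZ (h x') z" using assms x' by (intro add_right_mono hf)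
  finally show "dZ (h x) z \<le> dY (f x) (f x') + dZ (h x') z" .
qed

lemma cYZ_le1: "x \<in> topspace X \<Longrightarrow> cYZ (f x) z \<le> dZ (h x) z"
  unfolding cYZ_def by (rule INF_lower2[of x]) (auto simp: dY0 fX)
lemma cYZ_le2: "x \<in> topspace X \<Longrightarrow> cYZ y (h x) \<le> dY y (f x)"
  unfolding cYZ_def by (rule INF_lower2[of x]) (auto simp: dZ0 hX)
lemma cZY_le1: "x \<in> topspace X \<Longrightarrow> cZY (h x) y \<le> dY (f x) y"
  unfolding cZY_def by (rule INF_lower2[of x]) (auto simp: dZ0 hX)
lemma cZY_le2: "x \<in> topspace X \<Longrightarrow> cZY z (f x) \<le> dZ z (h x)"
  unfolding cZY_def by (rule INF_lower2[of x]) (auto simp: dY0 fX)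

lemma T_ZZY: assumes "z \<in> topspace Z" "z' \<in> topspace Z" "y \<in> topspace Y"
  shows "cZY z y \<le> dZ z z' + cZY z' y"
  unfolding cZY_def[of z' y]
proof (rule le_add_INFI)
  fix x assume x: "x \<in> topspace X"
  have "cZY z y \<le> dZ z (h x) + dY (f x) y" unfolding cZY_def by (rule INF_lower2[OF x]) simp
  also have "\<dots> \<le> (dZ z z' + dZ z' (h x)) + dY (f x) y" using assms x by (intro add_right_mono dZt hX)
  finally show "cZY z y \<le> dZ z z' + (dZ z' (h x) + dY (f x) y)" by (simp add: ac_simps)
qed

lemma T_YZZ: assumes "z \<in> topspace Z" "z' \<in> topspace Z" "y \<in> topspace Y"
  shows "cYZ y z' \<le> cYZ y z + dZ z z'"
  unfolding cYZ_def[of y z]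
proof (rule le_INF_addI)
  fix x assume x: "x \<in> topspace X"
  have "cYZ y z' \<le> dY y (f x) + dZ (h x) z'" unfolding cYZ_def by (rule INF_lower2[OF x]) simp
  also have "\<dots> \<le> dY y (f x) + (dZ (h x) z + dZ z z')" using assms x by (intro add_left_mono dZt hX)
  finally show "cYZ y z' \<le> dY y (f x) + dZ (h x) z + dZ z z'" by (simp add: ac_simps)
qed

lemma T_ZYZ: assumes "z \<in> topspace Z" "z'' \<in> topspace Z" "y \<in> topspace Y"
  shows "dZ z z'' \<le> cZY z y + cYZ y z''"
  unfolding cZY_def[of z y]
proof (rule le_INF_addI)
  fix x assume x: "x \<in> topspace X"
  show "dZ z z'' \<le> dZ z (h x) + dY (f x) y + cYZ y z''"
    unfolding cYZ_def
  proof (rule le_add_INFI)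
    fix x' assume x': "x' \<in> topspace X"
    have "dZ z z'' \<le> dZ z (h x) + dZ (h x) z''" using assms x by (intro dZt hX)
    also have "\<dots> \<le> dZ z (h x) + (dZ (h x) (h x') + dZ (h x') z'')" using assms x x' by (intro add_left_mono dZt hX)
    also have "\<dots> \<le> dZ z (h x) + (dY (f x) (f x') + dZ (h x') z'')" using assms x x' by (intro add_left_mono add_right_mono hf)
    also have "\<dots> \<le> dZ z (h x) + ((dY (f x) y + dY y (f x')) + dZ (h x') z'')" using assms x x' by (intro add_left_mono add_right_mono dYt fX)
    finally show "dZ z z'' \<le> dZ z (h x) + dY (f x) y + (dY y (f x') + dZ (h x') z'')" by (simp add: ac_simps)
  qed
qed

lemma T_ZYY1: assumes "z \<in> topspace Z" "y \<in> topspace Y" "y' \<in> topspace Y"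
  shows "cZY z y' \<le> cZY z y + dY y y'"
  unfolding cZY_def[of z y]
proof (rule le_INF_addI)
  fix x assume x: "x \<in> topspace X"
  have "cZY z y' \<le> dZ z (h x) + dY (f x) y'" unfolding cZY_def by (rule INF_lower2[OF x]) simp
  also have "\<dots> \<le> dZ z (h x) + (dY (f x) y + dY y y')" using assms x by (intro add_left_mono dYt fX)
  finally show "cZY z y' \<le> dZ z (h x) + dY (f x) y + dY y y'" by (simp add: ac_simps)
qed

lemma T_YYZ1: assumes "z \<in> topspace Z" "y \<in> topspace Y" "y' \<in> topspace Y"
  shows "cYZ y z \<le> dY y y' + cYZ y' z"
  unfolding cYZ_def[of y' z]
proof (rule le_add_INFI)
  fix x assume x: "x \<in> topspace X"
  have "cYZ y z \<le> dY y (f x) + dZ (h x) z" unfolding cYZ_def by (rule INF_lower2[OF x]) simp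
  also have "\<dots> \<le> (dY y y' + dY y' (f x)) + dZ (h x) z" using assms x by (intro add_right_mono dYt fX)
  finally show "cYZ y z \<le> dY y y' + (dY y' (f x) + dZ (h x) z)" by (simp add: ac_simps)
qed

lemma T_ZYY2: assumes "z \<in> topspace Z" "y \<in> topspace Y" "y' \<in> topspace Y"
  shows "cZY z y' \<le> cZY z y + PP y y'"
  unfolding PP_def
proof (rule le_add_INFI)
  fix x assume x: "x \<in> topspace X"
  have "cZY z y' \<le> dZ z (h x) + cZY (h x) y'" using assms x by (intro T_ZZY hX)
  also have "\<dots> \<le> cZY z (f x) + cZY (h x) y'" using assms x by (intro add_right_mono cZY_f)
  also have "\<dots> \<le> (cZY z y + dY y (f x)) + cZY (h x) y'" using assms x by (intro add_right_mono T_ZYY1 fX)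
  finally show "cZY z y' \<le> cZY z y + (dY y (f x) + cZY (h x) y')" by (simp add: ac_simps)
qed

lemma T_YZY: assumes "z \<in> topspace Z" "y \<in> topspace Y" "y'' \<in> topspace Y"
  shows "PP y y'' \<le> cYZ y z + cZY z y''"
  unfolding cYZ_def
proof (rule le_INF_addI)
  fix x assume x: "x \<in> topspace X"
  have "PP y y'' \<le> dY y (f x) + cZY (h x) y''" unfolding PP_def by (rule INF_lower2[OF x]) simp
  also have "\<dots> \<le> dY y (f x) + (dZ (h x) z + cZY z y'')" using assms x by (intro add_left_mono T_ZZY hX)
  finally show "PP y y'' \<le> dY y (f x) + dZ (h x) z + cZY z y''" by (simp add: ac_simps)
qed

lemma T_YYZ2: assumes "z \<in> topspace Z" "y \<in> topspace Y" "y' \<in> topspace Y"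
  shows "cYZ y z \<le> PP y y' + cYZ y' z"
  unfolding PP_def
proof (rule le_INF_addI)
  fix x assume x: "x \<in> topspace X"
  have "cYZ y z \<le> dY y (f x) + dZ (h x) z" unfolding cYZ_def by (rule INF_lower2[OF x]) simp
  also have "\<dots> \<le> dY y (f x) + (cZY (h x) y' + cYZ y' z)" using assms x by (intro add_left_mono T_ZYZ hX)
  finally show "cYZ y z \<le> dY y (f x) + cZY (h x) y' + cYZ y' z" by (simp add: ac_simps)
qed

lemma T_PdP: assumes "y \<in> topspace Y" "y' \<in> topspace Y" "y'' \<in> topspace Y"
  shows "PP y y'' \<le> dY y y' + PP y' y''"
  unfolding PP_def[of y' y'']
proof (rule le_add_INFI)
  fix x assume x: "x \<in> topspace X"
  have "PP y y'' \<le> dY y (f x) + cZY (h x) y''" unfolding PP_def by (rule INF_lower2[OF x]) simp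
  also have "\<dots> \<le> (dY y y' + dY y' (f x)) + cZY (h x) y''" using assms x by (intro add_right_mono dYt fX)
  finally show "PP y y'' \<le> dY y y' + (dY y' (f x) + cZY (h x) y'')" by (simp add: ac_simps)
qed

lemma T_PPd: assumes "y \<in> topspace Y" "y' \<in> topspace Y" "y'' \<in> topspace Y"
  shows "PP y y'' \<le> PP y y' + dY y' y''"
  unfolding PP_def[of y y']
proof (rule le_INF_addI)
  fix x assume x: "x \<in> topspace X"
  have "PP y y'' \<le> dY y (f x) + cZY (h x) y''" unfolding PP_def by (rule INF_lower2[OF x]) simp
  also have "\<dots> \<le> dY y (f x) + (cZY (h x) y' + dY y' y'')" using assms x by (intro add_left_mono T_ZYY1 hX)
  finally show "PP y y'' \<le> dY y (f x) + cZY (h x) y' + dY y' y''" by (simp add: ac_simps)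
qed

lemma T_PPP: assumes "y \<in> topspace Y" "y' \<in> topspace Y" "y'' \<in> topspace Y"
  shows "PP y y'' \<le> PP y y' + PP y' y''"
  unfolding PP_def[of y y']
proof (rule le_INF_addI)
  fix x assume x: "x \<in> topspace X"
  have "PP y y'' \<le> dY y (f x) + cZY (h x) y''" unfolding PP_def by (rule INF_lower2[OF x]) simp
  also have "\<dots> \<le> dY y (f x) + (cZY (h x) y' + PP y' y'')" using assms x by (intro add_left_mono T_ZYY2 hX)
  finally show "PP y y'' \<le> dY y (f x) + cZY (h x) y' + PP y' y''" by (simp add: ac_simps)
qed

lemma T_YYY: assumes "y \<in> topspace Y" "y' \<in> topspace Y" "y'' \<in> topspace Y"
  shows "cYY y y'' \<le> cYY y y' + cYY y' y''"
proof -
  have "cYY y y'' \<le> dY y y' + dY y' y''" using assms dYt[of y y' y''] by (simp add: cYY_def min.coboundedI1)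
  moreover have "cYY y y'' \<le> dY y y' + PP y' y''" using assms T_PdP[of y y' y''] by (simp add: cYY_def min.coboundedI2)
  moreover have "cYY y y'' \<le> PP y y' + dY y' y''" using assms T_PPd[of y y' y''] by (simp add: cYY_def min.coboundedI2)
  moreover have "cYY y y'' \<le> PP y y' + PP y' y''" using assms T_PPP[of y y' y''] by (simp add: cYY_def min.coboundedI2)
  ultimately show ?thesis by (simp add: cYY_def min_add_ennreal add_min_ennreal)
qed

lemma T_YYZ: assumes "z \<in> topspace Z" "y \<in> topspace Y" "y' \<in> topspace Y"
  shows "cYZ y z \<le> cYY y y' + cYZ y' z"
  using T_YYZ1[OF assms] T_YYZ2[OF assms] by (simp add: cYY_def min_add_ennreal)

lemma T_ZYY: assumes "z \<in> topspace Z" "y \<in> topspace Y" "y' \<in> topspace Y"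
  shows "cZY z y' \<le> cZY z y + cYY y y'"
  using T_ZYY1[OF assms] T_ZYY2[OF assms] by (simp add: cYY_def add_min_ennreal)

lemma T_YZY': assumes "z \<in> topspace Z" "y \<in> topspace Y" "y'' \<in> topspace Y"
  shows "cYY y y'' \<le> cYZ y z + cZY z y''"
  using T_YZY[OF assms] by (simp add: cYY_def min.coboundedI2)

end

lemma cm_comp: "continuous_map A B g \<Longrightarrow> continuous_map B C k \<Longrightarrow> continuous_map A C (\<lambda>x. k (g x))"
  using continuous_map_compose[of A B g C k] by (simp add: o_def)

context glue begin

definition SS :: "('y + 'z + 'p) set" where
  "SS = Inl ` topspace Y \<union> (\<lambda>z. Inr (Inl z)) ` topspace Z"

definition D :: "('y + 'z + 'p) \<Rightarrow> ('y + 'z + 'p) \<Rightarrow> ennreal" where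
  "D s t = (case s of
      Inl y \<Rightarrow> (case t of Inl y' \<Rightarrow> cYY y y' | Inr (Inl z) \<Rightarrow> cYZ y z | Inr (Inr _) \<Rightarrow> 0)
    | Inr (Inl z) \<Rightarrow> (case t of Inl y \<Rightarrow> cZY z y | Inr (Inl z') \<Rightarrow> dZ z z' | Inr (Inr _) \<Rightarrow> 0)
    | Inr (Inr _) \<Rightarrow> 0)"

lemma D_simps [simp]:
  "D (Inl y) (Inl y') = cYY y y'"
  "D (Inl y) (Inr (Inl z)) = cYZ y z"
  "D (Inr (Inl z)) (Inl y) = cZY z y"
  "D (Inr (Inl z)) (Inr (Inl z')) = dZ z z'"
  by (simp_all add: D_def)

lemma SS_cases:
  assumes "s \<in> SS"
  obtains y where "y \<in> topspace Y" "s = Inl y" | z where "z \<in> topspace Z" "s = Inr (Inl z)"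
  using assms unfolding SS_def by blast

lemma SS_simps [simp]: "Inl y \<in> SS \<longleftrightarrow> y \<in> topspace Y" "Inr (Inl z) \<in> SS \<longleftrightarrow> z \<in> topspace Z"
  "Inr (Inr w) \<notin> SS"
  unfolding SS_def by auto

lemma D_tri:
  assumes "s \<in> SS" "t \<in> SS" "r \<in> SS"
  shows "D s r \<le> D s t + D t r"
  using assms(1)
proof (cases rule: SS_cases)
  case (1 y)
  show ?thesis using assms(2)
  proof (cases rule: SS_cases)
    case (1 y')
    show ?thesis using assms(3)
      by (cases rule: SS_cases) (use \<open>s = Inl y\<close> \<open>y \<in> _\<close> 1 in \<open>auto intro: T_YYY T_YYZ\<close>)
  next
    case (2 z)
    show ?thesis using assms(3)
      by (cases rule: SS_cases) (use \<open>s = Inl y\<close> \<open>y \<in> _\<close> 2 in \<open>auto intro: T_YZY' T_YZZ\<close>)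
  qed
next
  case (2 z)
  show ?thesis using assms(2)
  proof (cases rule: SS_cases)
    case (1 y')
    show ?thesis using assms(3)
      by (cases rule: SS_cases) (use \<open>s = Inr (Inl z)\<close> \<open>z \<in> _\<close> 1 in \<open>auto intro: T_ZYY T_ZYZ\<close>)
  next
    case (2 z')
    show ?thesis using assms(3)
      by (cases rule: SS_cases) (use \<open>s = Inr (Inl z)\<close> \<open>z \<in> _\<close> 2 in \<open>auto intro: T_ZZY dZt\<close>)
  qed
qed

lemma D_refl: "s \<in> SS \<Longrightarrow> D s s = 0"
  by (cases rule: SS_cases) (auto simp: cYY_def dY0 dZ0)

lemma D_YY: "D (Inl y) (Inl y') \<le> dY y y'"
  by (simp add: cYY_def)

lemma D_fh: assumes "x \<in> topspace X"
  shows "D (Inl (f x)) (Inr (Inl (h x))) = 0" "D (Inr (Inl (h x))) (Inl (f x)) = 0"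
proof -
  have "cYZ (f x) (h x) \<le> 0" using cYZ_le1[OF assms, of "h x"] assms by (simp add: dZ0 hX)
  then show "D (Inl (f x)) (Inr (Inl (h x))) = 0" by simp
  have "cZY (h x) (f x) \<le> 0" using cZY_le1[OF assms, of "f x"] assms by (simp add: dY0 fX)
  then show "D (Inr (Inl (h x))) (Inl (f x)) = 0" by simp
qed

definition Sopen :: "('y + 'z + 'p) set \<Rightarrow> bool" where
  "Sopen U \<longleftrightarrow> U \<subseteq> SS \<and> openin Y {y. Inl y \<in> U} \<and> openin Z {z. Inr (Inl z) \<in> U}"

lemma istop_S: "istopology Sopen"
  unfolding istopology_def Sopen_def
proof (rule conjI; intro allI impI)
  fix S T :: "('y + 'z + 'p) set"
  assume "S \<subseteq> SS \<and> openin Y {y. Inl y \<in> S} \<and> openin Z {z. Inr (Inl z) \<in> S}"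
     and "T \<subseteq> SS \<and> openin Y {y. Inl y \<in> T} \<and> openin Z {z. Inr (Inl z) \<in> T}"
  moreover have "{y. Inl y \<in> S \<inter> T} = {y. Inl y \<in> S} \<inter> {y. Inl y \<in> T}" by auto
  moreover have "{z. Inr (Inl z) \<in> S \<inter> T} = {z. Inr (Inl z) \<in> S} \<inter> {z. Inr (Inl z) \<in> T}" by auto
  ultimately show "S \<inter> T \<subseteq> SS \<and> openin Y {y. Inl y \<in> S \<inter> T} \<and> openin Z {z. Inr (Inl z) \<in> S \<inter> T}"
    by auto
next
  fix K :: "('y + 'z + 'p) set set"
  assume K: "\<forall>S\<in>K. S \<subseteq> SS \<and> openin Y {y. Inl y \<in> S} \<and> openin Z {z. Inr (Inl z) \<in> S}"
  have e1: "{y. Inl y \<in> \<Union>K} = \<Union>((\<lambda>S. {y. Inl y \<in> S}) ` K)" by auto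
  have e2: "{z. Inr (Inl z) \<in> \<Union>K} = \<Union>((\<lambda>S. {z. Inr (Inl z) \<in> S}) ` K)" by auto
  show "\<Union>K \<subseteq> SS \<and> openin Y {y. Inl y \<in> \<Union>K} \<and> openin Z {z. Inr (Inl z) \<in> \<Union>K}"
    unfolding e1 e2 using K by (intro conjI openin_Union) auto
qed

definition ST :: "('y + 'z + 'p) topology" where "ST = topology Sopen"

lemma openin_ST: "openin ST U \<longleftrightarrow> Sopen U"
  by (simp add: ST_def istop_S)

lemma topspace_ST [simp]: "topspace ST = SS"
proof -
  have "Sopen SS" unfolding Sopen_def
  proof (intro conjI)
    have "{y. Inl y \<in> SS} = topspace Y" by auto
    then show "openin Y {y. Inl y \<in> SS}" by simp
    have "{z. Inr (Inl z) \<in> (SS :: ('y + 'z + 'p) set)} = topspace Z" by auto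
    then show "openin Z {z. Inr (Inl z) \<in> (SS :: ('y + 'z + 'p) set)}" by simp
  qed simp
  then show ?thesis unfolding topspace_def openin_ST Sopen_def by blast
qed

lemma cont_inl: "continuous_map Y ST Inl"
  unfolding continuous_map_def
proof (intro conjI allI impI)
  show "Inl \<in> topspace Y \<rightarrow> topspace ST" by auto
  fix U assume "openin ST U"
  then have "openin Y {y. Inl y \<in> U}" by (simp add: openin_ST Sopen_def)
  moreover have "{x \<in> topspace Y. Inl x \<in> U} = {y. Inl y \<in> U}"
    using openin_subset[OF calculation] by auto
  ultimately show "openin Y {x \<in> topspace Y. Inl x \<in> U}" by simp
qed

lemma cont_inr: "continuous_map Z ST (\<lambda>z. Inr (Inl z))"
  unfolding continuous_map_def
proof (intro conjI allI impI)
  show "(\<lambda>z. Inr (Inl z)) \<in> topspace Z \<rightarrow> topspace ST" by auto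
  fix U assume "openin ST U"
  then have "openin Z {z. Inr (Inl z) \<in> U}" by (simp add: openin_ST Sopen_def)
  moreover have "{x \<in> topspace Z. Inr (Inl x) \<in> U} = {z. Inr (Inl z) \<in> U}"
    using openin_subset[OF calculation] by auto
  ultimately show "openin Z {x \<in> topspace Z. Inr (Inl x) \<in> U}" by simp
qed

lemma open_inl: "openin Y U \<Longrightarrow> openin ST (Inl ` U)"
proof -
  assume U: "openin Y U"
  have "{y. Inl y \<in> (Inl ` U :: ('y + 'z + 'p) set)} = U" by auto
  moreover have "{z. Inr (Inl z) \<in> (Inl ` U :: ('y + 'z + 'p) set)} = {}" by auto
  moreover have "(Inl ` U :: ('y + 'z + 'p) set) \<subseteq> SS" using openin_subset[OF U] by auto
  ultimately show ?thesis using U by (simp add: openin_ST Sopen_def)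
qed

lemma open_inr: "openin Z U \<Longrightarrow> openin ST ((\<lambda>z. Inr (Inl z)) ` U)"
proof -
  assume U: "openin Z U"
  have "{y. Inl y \<in> ((\<lambda>z. Inr (Inl z)) ` U :: ('y + 'z + 'p) set)} = {}" by auto
  moreover have "{z. Inr (Inl z) \<in> ((\<lambda>z. Inr (Inl z)) ` U :: ('y + 'z + 'p) set)} = U" by auto
  moreover have "((\<lambda>z. Inr (Inl z)) ` U :: ('y + 'z + 'p) set) \<subseteq> SS" using openin_subset[OF U] by auto
  ultimately show ?thesis using U by (simp add: openin_ST Sopen_def)
qed

lemma compact_ST: "compact_space ST"
proof -
  have "compactin ST (Inl ` topspace Y)"
    using sY cont_inl by (intro image_compactin) (auto simp: metCH_sep_def compact_space_def)
  moreover have "compactin ST ((\<lambda>z. Inr (Inl z)) ` topspace Z)"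
    using sZ cont_inr by (intro image_compactin) (auto simp: metCH_sep_def compact_space_def)
  ultimately have "compactin ST SS" unfolding SS_def by (rule compactin_Un)
  then show ?thesis by (simp add: compact_space_def)
qed

lemma Hausdorff_ST: "Hausdorff_space ST"
  unfolding Hausdorff_space_def topspace_ST
proof (intro allI impI, elim conjE)
  fix s t :: "'y + 'z + 'p" assume s: "s \<in> SS" and t: "t \<in> SS" and st: "s \<noteq> t"
  have HY: "Hausdorff_space Y" and HZ: "Hausdorff_space Z" using sY sZ by (auto simp: metCH_sep_def)
  have oY: "openin ST (Inl ` topspace Y)" by (rule open_inl) simp
  have oZ: "openin ST ((\<lambda>z. Inr (Inl z)) ` topspace Z)" by (rule open_inr) simp
  show "\<exists>U V. openin ST U \<and> openin ST V \<and> s \<in> U \<and> t \<in> V \<and> disjnt U V"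
    using s
  proof (cases rule: SS_cases)
    case (1 y)
    show ?thesis using t
    proof (cases rule: SS_cases)
      case (1 y')
      then obtain U V where "openin Y U" "openin Y V" "y \<in> U" "y' \<in> V" "disjnt U V"
        using HY \<open>y \<in> _\<close> \<open>s = Inl y\<close> st unfolding Hausdorff_space_def by (metis)
      then show ?thesis using \<open>s = Inl y\<close> 1
        by (intro exI[of _ "Inl ` U"] exI[of _ "Inl ` V"]) (auto simp: open_inl disjnt_def)
    next
      case (2 z)
      then show ?thesis using \<open>s = Inl y\<close> \<open>y \<in> _\<close> oY oZ
        by (intro exI[of _ "Inl ` topspace Y"] exI[of _ "(\<lambda>z. Inr (Inl z)) ` topspace Z"]) (auto simp: disjnt_def)
    qed
  next
    case (2 z)
    show ?thesis using t
    proof (cases rule: SS_cases)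
      case (1 y')
      then show ?thesis using \<open>s = Inr (Inl z)\<close> \<open>z \<in> _\<close> oY oZ
        by (intro exI[of _ "(\<lambda>z. Inr (Inl z)) ` topspace Z"] exI[of _ "Inl ` topspace Y"]) (auto simp: disjnt_def)
    next
      case (2 z')
      then obtain U V where "openin Z U" "openin Z V" "z \<in> U" "z' \<in> V" "disjnt U V"
        using HZ \<open>z \<in> _\<close> \<open>s = Inr (Inl z)\<close> st unfolding Hausdorff_space_def by (metis)
      then show ?thesis using \<open>s = Inr (Inl z)\<close> 2
        by (intro exI[of _ "(\<lambda>z. Inr (Inl z)) ` U"] exI[of _ "(\<lambda>z. Inr (Inl z)) ` V"]) (auto simp: open_inr disjnt_def)
    qed
  qed
qed

end

lemma cpt_prod: "compact_space A \<Longrightarrow> compact_space B \<Longrightarrow> compact_space (prod_topology A B)"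
  by (simp add: compact_space_prod_topology)
lemma haus_prod: "Hausdorff_space A \<Longrightarrow> Hausdorff_space B \<Longrightarrow> Hausdorff_space (prod_topology A B)"
  by (simp add: Hausdorff_space_prod_topology)

context glue begin

lemma fcont: "continuous_map X Y f" using emb by (simp add: metCH_embedding_def metCH_mor_def)
lemma hcont: "continuous_map X Z h" using hm by (simp add: metCH_mor_def)

lemma ldY: "lsc (prod_topology Y Y) (\<lambda>p. dY (fst p) (snd p))"
  using sY by (simp add: metCH_sep_def upper_continuous_def lsc_def)
lemma ldZ: "lsc (prod_topology Z Z) (\<lambda>p. dZ (fst p) (snd p))"
  using sZ by (simp add: metCH_sep_def upper_continuous_def lsc_def)

lemma cptX: "compact_space X" and cptY: "compact_space Y" and cptZ: "compact_space Z"
  and HY: "Hausdorff_space Y" and HZ: "Hausdorff_space Z"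
  using sX sY sZ by (auto simp: metCH_sep_def)

lemma lcZY: "lsc (prod_topology Z Y) (\<lambda>p. cZY (fst p) (snd p))"
proof -
  have c1: "continuous_map (prod_topology (prod_topology Z Y) X) (prod_topology Z Z) (\<lambda>q. (fst (fst q), h (snd q)))"
    by (intro continuous_map_pairedI cm_comp[OF continuous_map_fst continuous_map_fst] cm_comp[OF continuous_map_snd hcont])
  have c2: "continuous_map (prod_topology (prod_topology Z Y) X) (prod_topology Y Y) (\<lambda>q. (f (snd q), snd (fst q)))"
    by (intro continuous_map_pairedI cm_comp[OF continuous_map_fst continuous_map_snd] cm_comp[OF continuous_map_snd fcont])
  have F: "lsc (prod_topology (prod_topology Z Y) X) (\<lambda>q. dZ (fst (fst q)) (h (snd q)) + dY (f (snd q)) (snd (fst q)))"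
    using lsc_add[OF lsc_compose[OF ldZ c1] lsc_compose[OF ldY c2]] by simp
  then have "lsc (prod_topology Z Y) (\<lambda>t. INF k\<in>topspace X. dZ (fst t) (h k) + dY (f k) (snd t))"
    using lsc_INF[OF cpt_prod[OF cptZ cptY] haus_prod[OF HZ HY] cptX F] by simp
  then show ?thesis unfolding cZY_def by simp
qed

lemma lcYZ: "lsc (prod_topology Y Z) (\<lambda>p. cYZ (fst p) (snd p))"
proof -
  have c1: "continuous_map (prod_topology (prod_topology Y Z) X) (prod_topology Y Y) (\<lambda>q. (fst (fst q), f (snd q)))"
    by (intro continuous_map_pairedI cm_comp[OF continuous_map_fst continuous_map_fst] cm_comp[OF continuous_map_snd fcont])
  have c2: "continuous_map (prod_topology (prod_topology Y Z) X) (prod_topology Z Z) (\<lambda>q. (h (snd q), snd (fst q)))"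
    by (intro continuous_map_pairedI cm_comp[OF continuous_map_fst continuous_map_snd] cm_comp[OF continuous_map_snd hcont])
  have F: "lsc (prod_topology (prod_topology Y Z) X) (\<lambda>q. dY (fst (fst q)) (f (snd q)) + dZ (h (snd q)) (snd (fst q)))"
    using lsc_add[OF lsc_compose[OF ldY c1] lsc_compose[OF ldZ c2]] by simp
  then have "lsc (prod_topology Y Z) (\<lambda>t. INF k\<in>topspace X. dY (fst t) (f k) + dZ (h k) (snd t))"
    using lsc_INF[OF cpt_prod[OF cptY cptZ] haus_prod[OF HY HZ] cptX F] by simp
  then show ?thesis unfolding cYZ_def by simp
qed

lemma lPP: "lsc (prod_topology Y Y) (\<lambda>p. PP (fst p) (snd p))"
proof -
  have c1: "continuous_map (prod_topology (prod_topology Y Y) X) (prod_topology Y Y) (\<lambda>q. (fst (fst q), f (snd q)))"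
    by (intro continuous_map_pairedI cm_comp[OF continuous_map_fst continuous_map_fst] cm_comp[OF continuous_map_snd fcont])
  have c2: "continuous_map (prod_topology (prod_topology Y Y) X) (prod_topology Z Y) (\<lambda>q. (h (snd q), snd (fst q)))"
    by (intro continuous_map_pairedI cm_comp[OF continuous_map_fst continuous_map_snd] cm_comp[OF continuous_map_snd hcont])
  have F: "lsc (prod_topology (prod_topology Y Y) X) (\<lambda>q. dY (fst (fst q)) (f (snd q)) + cZY (h (snd q)) (snd (fst q)))"
    using lsc_add[OF lsc_compose[OF ldY c1] lsc_compose[OF lcZY c2]] by simp
  then have "lsc (prod_topology Y Y) (\<lambda>t. INF k\<in>topspace X. dY (fst t) (f k) + cZY (h k) (snd t))"
    using lsc_INF[OF cpt_prod[OF cptY cptY] haus_prod[OF HY HY] cptX F] by simp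
  then show ?thesis unfolding PP_def by simp
qed

lemma lcYY: "lsc (prod_topology Y Y) (\<lambda>p. cYY (fst p) (snd p))"
  unfolding cYY_def by (rule lsc_min[OF ldY lPP])

lemma rect:
  assumes G: "lsc (prod_topology A B) G" and ab: "a \<in> topspace A" "b \<in> topspace B" "u < G (a,b)"
    and ea: "\<And>U. openin A U \<Longrightarrow> openin ST (ea ` U)"
    and eb: "\<And>U. openin B U \<Longrightarrow> openin ST (eb ` U)"
    and eq: "\<And>a b. a \<in> topspace A \<Longrightarrow> b \<in> topspace B \<Longrightarrow> ea a \<in> SS \<and> eb b \<in> SS \<and> D (ea a) (eb b) = G (a,b)"
  shows "\<exists>U V. openin ST U \<and> openin ST V \<and> ea a \<in> U \<and> eb b \<in> V \<and> U \<times> V \<subseteq> {p \<in> SS \<times> SS. u < D (fst p) (snd p)}"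
proof -
  have O: "openin (prod_topology A B) {p \<in> topspace A \<times> topspace B. u < G p}"
    using G by (simp add: lsc_def)
  have m: "(a,b) \<in> {p \<in> topspace A \<times> topspace B. u < G p}" using ab by simp
  obtain U V where UV: "openin A U" "openin B V" "a \<in> U" "b \<in> V"
    "U \<times> V \<subseteq> {p \<in> topspace A \<times> topspace B. u < G p}"
    using O[unfolded openin_prod_topology_alt, rule_format, OF m] by (elim exE conjE)
  show ?thesis
  proof (intro exI conjI)
    show "openin ST (ea ` U)" "openin ST (eb ` V)" using UV ea eb by auto
    show "ea a \<in> ea ` U" "eb b \<in> eb ` V" using UV by auto
    show "ea ` U \<times> eb ` V \<subseteq> {p \<in> SS \<times> SS. u < D (fst p) (snd p)}"
    proof
      fix p assume "p \<in> ea ` U \<times> eb ` V"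
      then obtain a' b' where ab': "a' \<in> U" "b' \<in> V" "p = (ea a', eb b')" by blast
      then have "(a',b') \<in> {p \<in> topspace A \<times> topspace B. u < G p}" using UV by blast
      then show "p \<in> {p \<in> SS \<times> SS. u < D (fst p) (snd p)}" using eq ab'(3) by auto
    qed
  qed
qed

lemma lscD: "lsc (prod_topology ST ST) (\<lambda>p. D (fst p) (snd p))"
  unfolding lsc_def
proof
  fix u
  show "openin (prod_topology ST ST) {p \<in> topspace (prod_topology ST ST). u < D (fst p) (snd p)}"
    unfolding topspace_prod_topology topspace_ST openin_prod_topology_alt
  proof (intro allI impI)
    fix s t assume st: "(s, t) \<in> {p \<in> SS \<times> SS. u < D (fst p) (snd p)}"
    then have s: "s \<in> SS" and t: "t \<in> SS" and lt: "u < D s t" by auto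
    show "\<exists>U V. openin ST U \<and> openin ST V \<and> s \<in> U \<and> t \<in> V \<and> U \<times> V \<subseteq> {p \<in> SS \<times> SS. u < D (fst p) (snd p)}"
      using s
    proof (cases rule: SS_cases)
      case (1 y)
      show ?thesis using t
      proof (cases rule: SS_cases)
        case (1 y')
        then show ?thesis using rect[OF lcYY, of y y' u Inl Inl] \<open>s = Inl y\<close> \<open>y \<in> _\<close> lt
          by (simp add: open_inl)
      next
        case (2 z)
        then show ?thesis using rect[OF lcYZ, of y z u Inl "\<lambda>z. Inr (Inl z)"] \<open>s = Inl y\<close> \<open>y \<in> _\<close> lt
          by (simp add: open_inl open_inr)
      qed
    next
      case (2 z)
      show ?thesis using t
      proof (cases rule: SS_cases)
        case (1 y')
        then show ?thesis using rect[OF lcZY, of z y' u "\<lambda>z. Inr (Inl z)" Inl] \<open>s = Inr (Inl z)\<close> \<open>z \<in> _\<close> lt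
          by (simp add: open_inl open_inr)
      next
        case (2 z')
        then show ?thesis using rect[OF ldZ, of z z' u "\<lambda>z. Inr (Inl z)" "\<lambda>z. Inr (Inl z)"] \<open>s = Inr (Inl z)\<close> \<open>z \<in> _\<close> lt
          by (simp add: open_inr)
      qed
    qed
  qed
qed

end

context glue begin

definition cls :: "('y + 'z + 'p) \<Rightarrow> ('y + 'z + 'p) set" where
  "cls s = {t \<in> SS. D s t = 0 \<and> D t s = 0}"

definition GG where "GG = cls ` SS"

lemma D_zero_trans: "s \<in> SS \<Longrightarrow> t \<in> SS \<Longrightarrow> r \<in> SS \<Longrightarrow> D s t = 0 \<Longrightarrow> D t r = 0 \<Longrightarrow> D s r = 0"
  using D_tri[of s t r] by simp

lemma cls_eq_iff: assumes "s \<in> SS" "t \<in> SS"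
  shows "cls s = cls t \<longleftrightarrow> (D s t = 0 \<and> D t s = 0)"
proof
  assume "cls s = cls t"
  moreover have "t \<in> cls t" using assms by (simp add: cls_def D_refl)
  ultimately have "t \<in> cls s" by simp
  then show "D s t = 0 \<and> D t s = 0" by (simp add: cls_def)
next
  assume st: "D s t = 0 \<and> D t s = 0"
  show "cls s = cls t"
  proof (rule set_eqI)
    fix r
    show "r \<in> cls s \<longleftrightarrow> r \<in> cls t"
    proof
      assume "r \<in> cls s"
      then have r: "r \<in> SS" "D s r = 0" "D r s = 0" by (auto simp: cls_def)
      then show "r \<in> cls t"
        using D_zero_trans[of t s r] D_zero_trans[of r s t] assms st by (simp add: cls_def)
    next
      assume "r \<in> cls t"
      then have r: "r \<in> SS" "D t r = 0" "D r t = 0" by (auto simp: cls_def)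
      then show "r \<in> cls s"
        using D_zero_trans[of s t r] D_zero_trans[of r t s] assms st by (simp add: cls_def)
    qed
  qed
qed

lemma D_resp: assumes "s \<in> SS" "s' \<in> SS" "t \<in> SS" "t' \<in> SS" "cls s = cls s'" "cls t = cls t'"
  shows "D s t = D s' t'"
proof -
  have z: "D s s' = 0" "D s' s = 0" "D t t' = 0" "D t' t = 0" using assms cls_eq_iff by auto
  have "D s t \<le> D s s' + D s' t" using D_tri[OF assms(1,2,3)] .
  also have "D s' t \<le> D s' t' + D t' t" using D_tri[OF assms(2,4,3)] .
  finally have 1: "D s t \<le> D s' t'" using z by simp
  have "D s' t' \<le> D s' s + D s t'" using D_tri[OF assms(2,1,4)] .
  also have "D s t' \<le> D s t + D t t'" using D_tri[OF assms(1,3,4)] .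
  finally have 2: "D s' t' \<le> D s t" using z by simp
  show ?thesis using 1 2 by simp
qed

definition rep where "rep p = (SOME s. s \<in> SS \<and> cls s = p)"

lemma rep: assumes "s \<in> SS" shows "rep (cls s) \<in> SS" "cls (rep (cls s)) = cls s"
proof -
  have "\<exists>t. t \<in> SS \<and> cls t = cls s" using assms by blast
  then have "rep (cls s) \<in> SS \<and> cls (rep (cls s)) = cls s" unfolding rep_def by (rule someI_ex)
  then show "rep (cls s) \<in> SS" "cls (rep (cls s)) = cls s" by auto
qed

definition dQ where "dQ p q = D (rep p) (rep q)"

lemma dQ_cls: assumes s: "s \<in> SS" and t: "t \<in> SS" shows "dQ (cls s) (cls t) = D s t"
  unfolding dQ_def using D_resp[OF rep(1)[OF s] s rep(1)[OF t] t rep(2)[OF s] rep(2)[OF t]] .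

definition Qopen :: "('y + 'z + 'p) set set \<Rightarrow> bool" where
  "Qopen U \<longleftrightarrow> U \<subseteq> GG \<and> openin ST {s \<in> SS. cls s \<in> U}"

lemma istop_Q: "istopology Qopen"
  unfolding istopology_def Qopen_def
proof (rule conjI; intro allI impI)
  fix S T :: "('y + 'z + 'p) set set"
  assume S: "S \<subseteq> GG \<and> openin ST {s \<in> SS. cls s \<in> S}" and T: "T \<subseteq> GG \<and> openin ST {s \<in> SS. cls s \<in> T}"
  have "{s \<in> SS. cls s \<in> S \<inter> T} = {s \<in> SS. cls s \<in> S} \<inter> {s \<in> SS. cls s \<in> T}" by auto
  then show "S \<inter> T \<subseteq> GG \<and> openin ST {s \<in> SS. cls s \<in> S \<inter> T}" using S T by auto
next
  fix K :: "('y + 'z + 'p) set set set"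
  assume K: "\<forall>S\<in>K. S \<subseteq> GG \<and> openin ST {s \<in> SS. cls s \<in> S}"
  have "{s \<in> SS. cls s \<in> \<Union>K} = \<Union>((\<lambda>S. {s \<in> SS. cls s \<in> S}) ` K)" by auto
  then show "\<Union>K \<subseteq> GG \<and> openin ST {s \<in> SS. cls s \<in> \<Union>K}" using K by (auto intro!: openin_Union)
qed

definition QT where "QT = topology Qopen"

lemma openin_QT: "openin QT U \<longleftrightarrow> Qopen U"
  by (simp add: QT_def istop_Q)

lemma topspace_QT [simp]: "topspace QT = GG"
proof -
  have "{s \<in> SS. cls s \<in> GG} = SS" by (auto simp: GG_def)
  moreover have "openin ST SS" using openin_topspace[of ST] by simp
  ultimately have "Qopen GG" unfolding Qopen_def by simp
  then show ?thesis unfolding topspace_def openin_QT Qopen_def by blast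
qed

lemma cont_cls: "continuous_map ST QT cls"
  unfolding continuous_map_def
proof (intro conjI allI impI)
  show "cls \<in> topspace ST \<rightarrow> topspace QT" by (auto simp: GG_def)
  fix U assume "openin QT U"
  then show "openin ST {x \<in> topspace ST. cls x \<in> U}" by (simp add: openin_QT Qopen_def)
qed

lemma closedin_QTI: assumes "V \<subseteq> GG" "closedin ST {s \<in> SS. cls s \<in> V}" shows "closedin QT V"
proof -
  have "{s \<in> SS. cls s \<in> GG - V} = SS - {s \<in> SS. cls s \<in> V}" by (auto simp: GG_def)
  moreover have "openin ST (SS - {s \<in> SS. cls s \<in> V})" using assms(2) unfolding closedin_def by simp
  ultimately have "Qopen (GG - V)" by (simp add: Qopen_def)
  then show ?thesis using assms(1) by (simp add: closedin_def openin_QT)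
qed

lemma cpt_S2: "compact_space (prod_topology ST ST)" by (intro cpt_prod compact_ST)
lemma haus_S2: "Hausdorff_space (prod_topology ST ST)" by (intro haus_prod Hausdorff_ST)

lemma closed_Rg: "closedin (prod_topology ST ST) {p \<in> SS \<times> SS. D (fst p) (snd p) = 0 \<and> D (snd p) (fst p) = 0}"
proof -
  have sw: "continuous_map (prod_topology ST ST) (prod_topology ST ST) (\<lambda>p. (snd p, fst p))"
    by (intro continuous_map_pairedI continuous_map_fst continuous_map_snd)
  have l2: "lsc (prod_topology ST ST) (\<lambda>p. D (snd p) (fst p))"
    using lsc_compose[OF lscD sw] by simp
  have "openin (prod_topology ST ST) {p \<in> topspace (prod_topology ST ST). 0 < D (fst p) (snd p)}"
    using lscD unfolding lsc_def by blast
  then have o1: "openin (prod_topology ST ST) {p \<in> SS \<times> SS. 0 < D (fst p) (snd p)}" by simp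
  have "openin (prod_topology ST ST) {p \<in> topspace (prod_topology ST ST). 0 < D (snd p) (fst p)}"
    using l2 unfolding lsc_def by blast
  then have o2: "openin (prod_topology ST ST) {p \<in> SS \<times> SS. 0 < D (snd p) (fst p)}" by simp
  have e: "{p \<in> SS \<times> SS. D (fst p) (snd p) = 0 \<and> D (snd p) (fst p) = 0} =
      topspace (prod_topology ST ST) - ({p \<in> SS \<times> SS. 0 < D (fst p) (snd p)} \<union> {p \<in> SS \<times> SS. 0 < D (snd p) (fst p)})"
    by (auto simp: zero_less_iff_neq_zero)
  show ?thesis unfolding e using o1 o2 by (intro closedin_diff closedin_topspace openin_Un)
qed

lemma closed_map_cls: "closed_map ST QT cls"
  unfolding closed_map_def
proof (intro allI impI)
  fix U assume U: "closedin ST U"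
  then have US: "U \<subseteq> SS" using closedin_subset by force
  let ?R = "{p \<in> SS \<times> SS. D (fst p) (snd p) = 0 \<and> D (snd p) (fst p) = 0}"
  have e: "{s \<in> SS. cls s \<in> cls ` U} = fst ` (?R \<inter> (SS \<times> U))"
  proof (intro set_eqI iffI)
    fix s assume "s \<in> {s \<in> SS. cls s \<in> cls ` U}"
    then obtain t where "s \<in> SS" "t \<in> U" "cls s = cls t" by auto
    then have "(s,t) \<in> ?R \<inter> (SS \<times> U)" using US cls_eq_iff by auto
    then show "s \<in> fst ` (?R \<inter> (SS \<times> U))" by (rule rev_image_eqI) simp
  next
    fix s assume "s \<in> fst ` (?R \<inter> (SS \<times> U))"
    then obtain t where st: "s \<in> SS" "t \<in> U" "D s t = 0" "D t s = 0" by auto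
    then have "cls s = cls t" using US cls_eq_iff[of s t] by auto
    then show "s \<in> {s \<in> SS. cls s \<in> cls ` U}" using st by auto
  qed
  have "closedin (prod_topology ST ST) (SS \<times> U)"
    using U closedin_topspace[of ST] by (simp add: closedin_prod_Times_iff)
  then have "closedin (prod_topology ST ST) (?R \<inter> (SS \<times> U))"
    using closed_Rg by (intro closedin_Int)
  then have "compactin (prod_topology ST ST) (?R \<inter> (SS \<times> U))"
    using cpt_S2 by (intro closedin_compact_space)
  then have "compactin ST (fst ` (?R \<inter> (SS \<times> U)))"
    by (rule image_compactin) (rule continuous_map_fst)
  then have "closedin ST {s \<in> SS. cls s \<in> cls ` U}" unfolding e using Hausdorff_ST by (simp add: compactin_imp_closedin)
  moreover have "cls ` U \<subseteq> GG" using US by (auto simp: GG_def)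
  ultimately show "closedin QT (cls ` U)" by (intro closedin_QTI)
qed

lemma normal_QT: "normal_space QT"
proof (rule normal_space_continuous_closed_map_image[OF _ cont_cls closed_map_cls])
  show "normal_space ST" using compact_ST Hausdorff_ST by (simp add: compact_Hausdorff_or_regular_imp_normal_space)
  show "cls ` topspace ST = topspace QT" by (simp add: GG_def)
qed

lemma t1_QT: "t1_space QT"
  unfolding t1_space_closedin_singleton
proof
  fix p assume "p \<in> topspace QT"
  then obtain s where s: "s \<in> SS" "p = cls s" by (auto simp: GG_def)
  have "closedin ST {s}" using s Hausdorff_ST by (simp add: Hausdorff_imp_t1_space closedin_t1_singleton)
  then have "closedin QT (cls ` {s})" using closed_map_cls unfolding closed_map_def by blast
  then show "closedin QT {p}" using s by simp
qed

lemma Hausdorff_QT: "Hausdorff_space QT"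
  using normal_QT t1_QT by (rule normal_t1_imp_Hausdorff_space)

lemma compact_QT: "compact_space QT"
proof -
  have "compactin QT (cls ` topspace ST)"
    using compact_ST cont_cls by (intro image_compactin) (auto simp: compact_space_def)
  then show ?thesis by (simp add: compact_space_def GG_def)
qed

lemma GG_cases: assumes "p \<in> GG" obtains s where "s \<in> SS" "p = cls s"
  using assms by (auto simp: GG_def)

lemma uc_QT: "upper_continuous QT dQ"
  unfolding upper_continuous_def
proof
  fix u :: ennreal
  let ?g = "\<lambda>q. (cls (fst q), cls (snd q))"
  have cg: "continuous_map (prod_topology ST ST) (prod_topology QT QT) ?g"
    by (intro continuous_map_pairedI cm_comp[OF continuous_map_fst cont_cls] cm_comp[OF continuous_map_snd cont_cls])
  have "closedin (prod_topology ST ST) {q \<in> SS \<times> SS. D (fst q) (snd q) \<le> u}"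
  proof -
    have "{q \<in> SS \<times> SS. D (fst q) (snd q) \<le> u} = topspace (prod_topology ST ST) - {q \<in> SS \<times> SS. u < D (fst q) (snd q)}"
      by auto
    moreover have "openin (prod_topology ST ST) {q \<in> topspace (prod_topology ST ST). u < D (fst q) (snd q)}"
      using lscD unfolding lsc_def by blast
    ultimately show ?thesis using closedin_diff[OF closedin_topspace[of "prod_topology ST ST"]] by simp
  qed
  then have "compactin (prod_topology ST ST) {q \<in> SS \<times> SS. D (fst q) (snd q) \<le> u}"
    using cpt_S2 by (intro closedin_compact_space)
  then have "compactin (prod_topology QT QT) (?g ` {q \<in> SS \<times> SS. D (fst q) (snd q) \<le> u})"
    using cg by (rule image_compactin)
  then have C: "closedin (prod_topology QT QT) (?g ` {q \<in> SS \<times> SS. D (fst q) (snd q) \<le> u})"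
    using haus_prod[OF Hausdorff_QT Hausdorff_QT] by (simp add: compactin_imp_closedin)
  have e: "{p \<in> topspace QT \<times> topspace QT. u < dQ (fst p) (snd p)} =
    topspace (prod_topology QT QT) - ?g ` {q \<in> SS \<times> SS. D (fst q) (snd q) \<le> u}"
  proof (intro set_eqI iffI)
    fix p assume p: "p \<in> {p \<in> topspace QT \<times> topspace QT. u < dQ (fst p) (snd p)}"
    then obtain s t where st: "s \<in> SS" "t \<in> SS" "p = (cls s, cls t)" by (auto simp: GG_def)
    have "p \<notin> ?g ` {q \<in> SS \<times> SS. D (fst q) (snd q) \<le> u}"
    proof
      assume "p \<in> ?g ` {q \<in> SS \<times> SS. D (fst q) (snd q) \<le> u}"
      then obtain s' t' where "s' \<in> SS" "t' \<in> SS" "D s' t' \<le> u" "p = (cls s', cls t')" by auto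
      then have "dQ (fst p) (snd p) \<le> u" by (simp add: dQ_cls)
      moreover have "u < dQ (fst p) (snd p)" using p by simp
      ultimately show False by order
    qed
    then show "p \<in> topspace (prod_topology QT QT) - ?g ` {q \<in> SS \<times> SS. D (fst q) (snd q) \<le> u}"
      using p by simp
  next
    fix p assume p: "p \<in> topspace (prod_topology QT QT) - ?g ` {q \<in> SS \<times> SS. D (fst q) (snd q) \<le> u}"
    then obtain s t where st: "s \<in> SS" "t \<in> SS" "p = (cls s, cls t)" by (auto simp: GG_def)
    have "\<not> D s t \<le> u"
    proof
      assume "D s t \<le> u"
      then have "p \<in> ?g ` {q \<in> SS \<times> SS. D (fst q) (snd q) \<le> u}" using st by (intro rev_image_eqI[of "(s,t)"]) auto
      then show False using p by simp
    qed
    then show "p \<in> {p \<in> topspace QT \<times> topspace QT. u < dQ (fst p) (snd p)}"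
      using p st by (simp add: dQ_cls not_le)
  qed
  show "openin (prod_topology QT QT) {p \<in> topspace QT \<times> topspace QT. u < dQ (fst p) (snd p)}"
    unfolding e using C by (intro openin_diff openin_topspace)
qed

lemma sep_QT: "metCH_sep QT dQ"
  unfolding metCH_sep_def
proof (intro conjI)
  show "compact_space QT" by (rule compact_QT)
  show "Hausdorff_space QT" by (rule Hausdorff_QT)
  show "upper_continuous QT dQ" by (rule uc_QT)
  show "metric_on (topspace QT) dQ"
    unfolding metric_on_def topspace_QT
  proof (intro conjI ballI)
    fix p assume "p \<in> GG" then show "dQ p p = 0" by (elim GG_cases) (simp add: dQ_cls D_refl)
  next
    fix p q r assume "p \<in> GG" "q \<in> GG" "r \<in> GG"
    then show "dQ p r \<le> dQ p q + dQ q r"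
      by (elim GG_cases) (simp add: dQ_cls D_tri)
  qed
  show "separated_metric (topspace QT) dQ"
    unfolding separated_metric_def topspace_QT
  proof (intro ballI impI)
    fix p q assume "p \<in> GG" "q \<in> GG" "dQ p q = 0 \<and> dQ q p = 0"
    then show "p = q" by (elim GG_cases) (simp add: dQ_cls cls_eq_iff)
  qed
qed

lemma exists_Q:
  "\<exists>(Q :: ('y + 'z + 'p) set topology) dQ a b. metCH_sep Q dQ \<and> metCH_mor Y dY Q dQ a \<and> metCH_mor Z dZ Q dQ b \<and>
     (\<forall>x\<in>topspace X. a (f x) = b (h x)) \<and> inj_on b (topspace Z) \<and>
     (\<forall>z\<in>topspace Z. \<forall>z'\<in>topspace Z. dQ (b z) (b z') = dZ z z')"
proof (intro exI conjI)
  show "metCH_sep QT dQ" by (rule sep_QT)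
  show "metCH_mor Y dY QT dQ (\<lambda>y. cls (Inl y))"
    unfolding metCH_mor_def
    by (auto simp: dQ_cls cYY_def intro: cm_comp[OF cont_inl cont_cls])
  show "metCH_mor Z dZ QT dQ (\<lambda>z. cls (Inr (Inl z)))"
    unfolding metCH_mor_def
    by (auto simp: dQ_cls intro: cm_comp[OF cont_inr cont_cls])
  show "\<forall>x\<in>topspace X. cls (Inl (f x)) = cls (Inr (Inl (h x)))"
    by (auto simp: cls_eq_iff D_fh[simplified] fX hX)
  show "inj_on (\<lambda>z. cls (Inr (Inl z))) (topspace Z)"
  proof (rule inj_onI)
    fix z z' assume "z \<in> topspace Z" "z' \<in> topspace Z" "cls (Inr (Inl z)) = cls (Inr (Inl z'))"
    then show "z = z'" using sZ by (auto simp: cls_eq_iff metCH_sep_def separated_metric_def)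
  qed
  show "\<forall>z\<in>topspace Z. \<forall>z'\<in>topspace Z. dQ (cls (Inr (Inl z))) (cls (Inr (Inl z'))) = dZ z z'"
    by (simp add: dQ_cls)
qed

end

theorem corollary4p2:
  fixes X :: "'x topology" and dX :: "'x \<Rightarrow> 'x \<Rightarrow> ennreal"
    and Y :: "'y topology" and dY :: "'y \<Rightarrow> 'y \<Rightarrow> ennreal"
    and Z :: "'z topology" and dZ :: "'z \<Rightarrow> 'z \<Rightarrow> ennreal"
    and P :: "'p topology" and dP :: "'p \<Rightarrow> 'p \<Rightarrow> ennreal"
    and f :: "'x \<Rightarrow> 'y" and h :: "'x \<Rightarrow> 'z" and gY :: "'y \<Rightarrow> 'p" and gZ :: "'z \<Rightarrow> 'p"
  assumes "metCH_pushout TYPE(('y + 'z + 'p) set) X dX Y dY Z dZ P dP f h gY gZ"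
    and "metCH_embedding X dX Y dY f"
  shows "metCH_embedding Z dZ P dP gZ"
proof -
  note PO = assms(1)[unfolded metCH_pushout_def]
  have sX: "metCH_sep X dX" and sY: "metCH_sep Y dY" and sZ: "metCH_sep Z dZ"
    and hm: "metCH_mor X dX Z dZ h" and gZm: "metCH_mor Z dZ P dP gZ"
    using PO by auto
  have UP: "\<And>(Q :: ('y + 'z + 'p) set topology) dQ a b. metCH_sep Q dQ \<Longrightarrow> metCH_mor Y dY Q dQ a \<Longrightarrow>
      metCH_mor Z dZ Q dQ b \<Longrightarrow> (\<forall>x\<in>topspace X. a (f x) = b (h x)) \<Longrightarrow>
      (\<exists>u. metCH_mor P dP Q dQ u \<and> (\<forall>y\<in>topspace Y. u (gY y) = a y) \<and> (\<forall>z\<in>topspace Z. u (gZ z) = b z) \<and>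
             (\<forall>v. metCH_mor P dP Q dQ v \<and>
                  (\<forall>y\<in>topspace Y. v (gY y) = a y) \<and> (\<forall>z\<in>topspace Z. v (gZ z) = b z)
                  \<longrightarrow> (\<forall>p\<in>topspace P. v p = u p)))"
    using PO by blast
  interpret glue X dX Y dY Z dZ f h "TYPE('p)"
    using sX sY sZ assms(2) hm by unfold_locales
  obtain Q :: "('y + 'z + 'p) set topology" and dq a b where
    Q: "metCH_sep Q dq" "metCH_mor Y dY Q dq a" "metCH_mor Z dZ Q dq b"
      "\<forall>x\<in>topspace X. a (f x) = b (h x)" "inj_on b (topspace Z)"
      "\<forall>z\<in>topspace Z. \<forall>z'\<in>topspace Z. dq (b z) (b z') = dZ z z'"
    using exists_Q by blast
  obtain u where u: "metCH_mor P dP Q dq u" "\<forall>z\<in>topspace Z. u (gZ z) = b z"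
    using UP[OF Q(1-4)] by blast
  have gZP: "gZ z \<in> topspace P" if "z \<in> topspace Z" for z
    using gZm that unfolding metCH_mor_def continuous_map_def by blast
  have dist: "dP (gZ z) (gZ z') = dZ z z'" if z: "z \<in> topspace Z" "z' \<in> topspace Z" for z z'
  proof (rule antisym)
    show "dP (gZ z) (gZ z') \<le> dZ z z'" using gZm z unfolding metCH_mor_def by blast
    have "dZ z z' = dq (u (gZ z)) (u (gZ z'))" using Q(6) u(2) z by simp
    also have "\<dots> \<le> dP (gZ z) (gZ z')" using u(1) gZP z unfolding metCH_mor_def by blast
    finally show "dZ z z' \<le> dP (gZ z) (gZ z')" .
  qed
  have inj: "inj_on gZ (topspace Z)"
  proof (rule inj_onI)
    fix z z' assume z: "z \<in> topspace Z" "z' \<in> topspace Z" and e: "gZ z = gZ z'"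
    then have "b z = b z'" using u(2) by metis
    then show "z = z'" using Q(5) z by (simp add: inj_on_def)
  qed
  show ?thesis unfolding metCH_embedding_def using gZm inj dist by blast
qed

end
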